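(* Every RPA-recognizable $\omega$-language is RPBA-recognizable, and there is an RPBA-recognizable $\omega$-language that is not RPA-recognizable.
   Context: A Parikh automaton of dimension $d$ is $\mathcal{A}=(Q,\Sigma,q_0,\Delta,F,C)$ with finite $Q$, $q_0\in Q$, $F\subseteq Q$, finite $\Delta\subseteq Q\times\Sigma\times\mathbb{N}^d\times Q$ and semi-linear $C\subseteq\mathbb{N}^d$ (a finite union of sets $\{b_0+\sum_{j=1}^\ell b_jz_j\mid z_j\in\mathbb{N}\}$, $b_j\in\mathbb{N}^d$). A run on an infinite word $\alpha$ is $r_1r_2\cdots$ with $r_i=(p_{i-1},\alpha_i,\mathbf{v}_i,p_i)\in\Delta$, $p_0=q_0$, and $\rho(r_1\cdots r_i)=\sum_{k\le i}\mathbf{v}_k$. For an RPA (reachability Parikh automaton) the run is accepting if there is $i\ge1$ with $p_i\in F$ and $\rho(r_1\cdots r_i)\in C$. For an RPBA (reachability Parikh–Büchi automaton) the run is accepting if there is $i\ge1$ with $p_i\in F$ and $\rho(r_1\cdots r_i)\in C$, and additionally there are infinitely many $j$ with $p_j\in F$. An $\omega$-language is X-recognizable if it equals the set of infinite words with an accepting run of some automaton of type X. *)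

theory Defs
  imports Main
begin

text \<open>Vectors of \<nat>^d are represented as lists of naturals of length d.\<close>

definition nvecs :: "nat \<Rightarrow> nat list set" where
  "nvecs d = {v. length v = d}"

definition linear_set :: "nat \<Rightarrow> nat list \<Rightarrow> nat list list \<Rightarrow> nat list set" where
  "linear_set d b0 P =
     {map (\<lambda>k. b0 ! k + (\<Sum>j<length P. z j * (P ! j ! k))) [0..<d] | z. True}"

definition semilinear :: "nat \<Rightarrow> nat list set \<Rightarrow> bool" where
  "semilinear d C \<longleftrightarrow>
     (\<exists>G :: (nat list \<times> nat list list) set. finite G \<and>
        (\<forall>(b0, P) \<in> G. b0 \<in> nvecs d \<and> set P \<subseteq> nvecs d) \<and>
        C = (\<Union>(b0, P) \<in> G. linear_set d b0 P))"

text \<open>A Parikh automaton (Q, \<Sigma>, q0, \<Delta>, F, C) of dimension d; the alphabet is the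
  (finite) type 'a.\<close>
record ('q, 'a) parikh_aut =
  pa_states :: "'q set"
  pa_init :: 'q
  pa_trans :: "('q \<times> 'a \<times> nat list \<times> 'q) set"
  pa_final :: "'q set"
  pa_dim :: nat
  pa_constr :: "nat list set"

definition pa_wf :: "('q, 'a) parikh_aut \<Rightarrow> bool" where
  "pa_wf A \<longleftrightarrow> finite (pa_states A) \<and> pa_init A \<in> pa_states A
     \<and> pa_final A \<subseteq> pa_states A \<and> finite (pa_trans A)
     \<and> pa_trans A \<subseteq> pa_states A \<times> UNIV \<times> nvecs (pa_dim A) \<times> pa_states A
     \<and> semilinear (pa_dim A) (pa_constr A)"

text \<open>A run on the infinite word \<alpha> (letters \<alpha> 0, \<alpha> 1, ...) is given by the state
  sequence p (p 0 = q0) and the vector labels v; the i-th transition (counted from 0)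
  is (p i, \<alpha> i, v i, p (i+1)).\<close>
definition pa_run :: "('q, 'a) parikh_aut \<Rightarrow> (nat \<Rightarrow> 'a) \<Rightarrow> (nat \<Rightarrow> 'q) \<Rightarrow> (nat \<Rightarrow> nat list) \<Rightarrow> bool" where
  "pa_run A \<alpha> p v \<longleftrightarrow> p 0 = pa_init A \<and> (\<forall>i. (p i, \<alpha> i, v i, p (Suc i)) \<in> pa_trans A)"

definition psum :: "nat \<Rightarrow> (nat \<Rightarrow> nat list) \<Rightarrow> nat \<Rightarrow> nat list" where
  "psum d v n = map (\<lambda>k. \<Sum>i<n. v i ! k) [0..<d]"

definition rpa_accepting :: "('q, 'a) parikh_aut \<Rightarrow> (nat \<Rightarrow> 'q) \<Rightarrow> (nat \<Rightarrow> nat list) \<Rightarrow> bool" where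
  "rpa_accepting A p v \<longleftrightarrow>
     (\<exists>i\<ge>1. p i \<in> pa_final A \<and> psum (pa_dim A) v i \<in> pa_constr A)"

definition rpba_accepting :: "('q, 'a) parikh_aut \<Rightarrow> (nat \<Rightarrow> 'q) \<Rightarrow> (nat \<Rightarrow> nat list) \<Rightarrow> bool" where
  "rpba_accepting A p v \<longleftrightarrow>
     (\<exists>i\<ge>1. p i \<in> pa_final A \<and> psum (pa_dim A) v i \<in> pa_constr A)
     \<and> infinite {j. p j \<in> pa_final A}"

definition rpa_lang :: "('q, 'a) parikh_aut \<Rightarrow> (nat \<Rightarrow> 'a) set" where
  "rpa_lang A = {\<alpha>. \<exists>p v. pa_run A \<alpha> p v \<and> rpa_accepting A p v}"

definition rpba_lang :: "('q, 'a) parikh_aut \<Rightarrow> (nat \<Rightarrow> 'a) set" where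
  "rpba_lang A = {\<alpha>. \<exists>p v. pa_run A \<alpha> p v \<and> rpba_accepting A p v}"

text \<open>Recognizability; states are taken from nat (any finite state set embeds).\<close>
definition RPA_recognizable :: "(nat \<Rightarrow> 'a::finite) set \<Rightarrow> bool" where
  "RPA_recognizable L \<longleftrightarrow> (\<exists>A :: (nat, 'a) parikh_aut. pa_wf A \<and> L = rpa_lang A)"

definition RPBA_recognizable :: "(nat \<Rightarrow> 'a::finite) set \<Rightarrow> bool" where
  "RPBA_recognizable L \<longleftrightarrow> (\<exists>A :: (nat, 'a) parikh_aut. pa_wf A \<and> L = rpba_lang A)"

end

theory Submission
  imports Defs
begin

definition bu :: "(nat,'a) parikh_aut \<Rightarrow> (nat,'a) parikh_aut" where
"bu A = (| pa_states = (\<lambda>q. 2*q) ` pa_states A \<union> (\<lambda>q. 2*q+1) ` pa_states A,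
 pa_init = 2 * pa_init A,
 pa_trans = (\<lambda>(p,a,v,q). (2*p,a,v,2*q)) ` pa_trans A
   \<union> (\<lambda>(p,a,v,q). (2*p,a,v,2*q+1)) ` {t \<in> pa_trans A. snd (snd (snd t)) \<in> pa_final A}
   \<union> (\<lambda>(p,a,v,q). (2*p+1,a,replicate (pa_dim A) 0,2*q+1)) ` pa_trans A,
 pa_final = (\<lambda>q. 2*q+1) ` pa_states A, pa_dim = pa_dim A, pa_constr = pa_constr A |)"

lemma bu_simps: "pa_init (bu A) = 2 * pa_init A" "pa_dim (bu A) = pa_dim A"
  "pa_constr (bu A) = pa_constr A" "pa_final (bu A) = (\<lambda>q. 2*q+1) ` pa_states A"
  "pa_states (bu A) = (\<lambda>q. 2*q) ` pa_states A \<union> (\<lambda>q. 2*q+1) ` pa_states A"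
  by (auto simp: bu_def)

lemma bu_trans: "(x,a,w,y) \<in> pa_trans (bu A) \<longleftrightarrow>
   (\<exists>p q. x = 2*p \<and> y = 2*q \<and> (p,a,w,q) \<in> pa_trans A)
 \<or> (\<exists>p q. x = 2*p \<and> y = 2*q+1 \<and> q \<in> pa_final A \<and> (p,a,w,q) \<in> pa_trans A)
 \<or> (\<exists>p q v. x = 2*p+1 \<and> y = 2*q+1 \<and> w = replicate (pa_dim A) 0 \<and> (p,a,v,q) \<in> pa_trans A)"
  by (auto simp: bu_def image_iff)

lemma run_states:
  assumes "pa_wf A" "pa_run A \<alpha> p v" shows "p n \<in> pa_states A"
proof (cases n)
  case 0 then show ?thesis using assms by (auto simp: pa_wf_def pa_run_def)
next
  case (Suc m)
  have "(p m, \<alpha> m, v m, p (Suc m)) \<in> pa_trans A" using assms(2) by (auto simp: pa_run_def)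
  then show ?thesis using assms(1) Suc by (auto simp: pa_wf_def)
qed

lemma bu_wf: assumes "pa_wf A" shows "pa_wf (bu A)"
proof -
  have M: "x \<in> pa_states (bu A) \<and> w \<in> nvecs (pa_dim (bu A)) \<and> y \<in> pa_states (bu A)"
    if "(x,a,w,y) \<in> pa_trans (bu A)" for x a w y
    using that assms unfolding bu_trans bu_simps pa_wf_def nvecs_def
    by (elim disjE exE conjE) (simp; blast)+
  have T: "pa_trans (bu A) \<subseteq> pa_states (bu A) \<times> UNIV \<times> nvecs (pa_dim (bu A)) \<times> pa_states (bu A)"
    using M by fast
  show ?thesis using assms T unfolding pa_wf_def
    by (auto simp: bu_simps) (simp add: bu_def)
qed


lemma psum_cong: "(\<And>n. n < i \<Longrightarrow> v n = w n) \<Longrightarrow> psum d v i = psum d w i"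
  unfolding psum_def by (intro map_cong refl sum.cong) auto

lemma bu_sub1: assumes "pa_wf A" shows "rpa_lang A \<subseteq> rpba_lang (bu A)"
proof
  fix \<alpha> assume "\<alpha> \<in> rpa_lang A"
  then obtain p v i where R: "pa_run A \<alpha> p v" and i: "i \<ge> 1" "p i \<in> pa_final A"
    "psum (pa_dim A) v i \<in> pa_constr A"
    by (auto simp: rpa_lang_def rpa_accepting_def)
  have S: "p n \<in> pa_states A" for n using run_states[OF assms R] .
  define p' where "p' n = (if n < i then 2 * p n else 2 * p n + 1)" for n
  define v' where "v' n = (if n < i then v n else replicate (pa_dim A) 0)" for n
  have "pa_run (bu A) \<alpha> p' v'"
    unfolding pa_run_def
  proof (intro conjI allI)
    show "p' 0 = pa_init (bu A)" using R i by (simp add: p'_def pa_run_def bu_simps)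
    fix n
    have tr: "(p n, \<alpha> n, v n, p (Suc n)) \<in> pa_trans A" using R by (simp add: pa_run_def)
    show "(p' n, \<alpha> n, v' n, p' (Suc n)) \<in> pa_trans (bu A)"
    proof (cases "Suc n < i")
      case True then show ?thesis using tr by (auto simp: p'_def v'_def bu_trans)
    next
      case F: False
      show ?thesis
      proof (cases "Suc n = i")
        case True then show ?thesis using tr i by (auto simp: p'_def v'_def bu_trans)
      next
        case False then show ?thesis using tr F by (auto simp: p'_def v'_def bu_trans)
      qed
    qed
  qed
  moreover have "rpba_accepting (bu A) p' v'"
    unfolding rpba_accepting_def
  proof (intro conjI)
    have "psum (pa_dim A) v' i = psum (pa_dim A) v i" by (rule psum_cong) (simp add: v'_def)
    then show "\<exists>i\<ge>1. p' i \<in> pa_final (bu A) \<and> psum (pa_dim (bu A)) v' i \<in> pa_constr (bu A)"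
      using i S by (auto simp: bu_simps p'_def intro!: exI[of _ i])
    have "{i..} \<subseteq> {j. p' j \<in> pa_final (bu A)}" using S by (auto simp: bu_simps p'_def)
    then show "infinite {j. p' j \<in> pa_final (bu A)}" using infinite_Ici finite_subset by blast
  qed
  ultimately show "\<alpha> \<in> rpba_lang (bu A)" by (auto simp: rpba_lang_def)
qed


lemma bu_sub2: assumes "pa_wf A" shows "rpba_lang (bu A) \<subseteq> rpa_lang A"
proof
  fix \<alpha> assume "\<alpha> \<in> rpba_lang (bu A)"
  then obtain p' v' j where R: "pa_run (bu A) \<alpha> p' v'" and j: "j \<ge> 1" "p' j \<in> pa_final (bu A)"
    "psum (pa_dim A) v' j \<in> pa_constr A"
    by (auto simp: rpba_lang_def rpba_accepting_def bu_simps)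
  have tr: "(p' n, \<alpha> n, v' n, p' (Suc n)) \<in> pa_trans (bu A)" for n
    using R by (simp add: pa_run_def)
  have p0: "even (p' 0)" using R by (simp add: pa_run_def bu_simps)
  have oj: "odd (p' j)" using j by (auto simp: bu_simps)
  have oddS: "odd (p' (Suc n))" if "odd (p' n)" for n
    using tr[of n] that unfolding bu_trans by auto
  have oddZ: "v' n = replicate (pa_dim A) 0" if "odd (p' n)" for n
    using tr[of n] that unfolding bu_trans by auto
  define i where "i = (LEAST n. odd (p' n))"
  have oi: "odd (p' i)" unfolding i_def using oj by (rule LeastI)
  have ev: "even (p' n)" if "n < i" for n using that not_less_Least i_def by blast
  have i1: "i \<ge> 1" using oi p0 by (cases i) auto
  have oge: "odd (p' n)" if "n \<ge> i" for n using that
  proof (induction n rule: dec_induct)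
    case base then show ?case using oi .
  next
    case (step n) then show ?case using oddS by blast
  qed
  have ij: "i \<le> j" using oj ev by (meson not_le)
  define p where "p n = p' n div 2" for n
  define v where "v n = (if even (p' n) then v' n else (SOME w. (p n, \<alpha> n, w, p (Suc n)) \<in> pa_trans A))" for n
  have "pa_run A \<alpha> p v" unfolding pa_run_def
  proof (intro conjI allI)
    show "p 0 = pa_init A" using R by (simp add: p_def pa_run_def bu_simps)
    fix n
    show "(p n, \<alpha> n, v n, p (Suc n)) \<in> pa_trans A"
    proof (cases "even (p' n)")
      case True then show ?thesis using tr[of n] unfolding bu_trans by (auto simp: p_def v_def)
    next
      case False
      then have "\<exists>w. (p n, \<alpha> n, w, p (Suc n)) \<in> pa_trans A"
        using tr[of n] unfolding bu_trans by (auto simp: p_def)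
      then show ?thesis using False unfolding v_def by (simp add: someI_ex[where P="\<lambda>w. (p n, \<alpha> n, w, p (Suc n)) \<in> pa_trans A"])
    qed
  qed
  moreover have "rpa_accepting A p v" unfolding rpa_accepting_def
  proof (intro exI[of _ i] conjI i1)
    obtain m where m: "i = Suc m" using i1 by (cases i) auto
    have "even (p' m)" using ev m by simp
    then show "p i \<in> pa_final A" using tr[of m] oi m unfolding bu_trans by (auto simp: p_def)
    have "psum (pa_dim A) v i = psum (pa_dim A) v' i" by (rule psum_cong) (simp add: v_def ev)
    also have "\<dots> = psum (pa_dim A) v' j"
      unfolding psum_def
    proof (intro map_cong refl)
      fix k assume "k \<in> set [0..<pa_dim A]"
      then have k: "k < pa_dim A" by simp
      have "(\<Sum>n<j. v' n ! k) = (\<Sum>n<i. v' n ! k) + (\<Sum>n\<in>{i..<j}. v' n ! k)"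
        using ij by (metis lessThan_atLeast0 sum.atLeastLessThan_concat zero_le)
      also have "(\<Sum>n\<in>{i..<j}. v' n ! k) = 0" using oddZ oge k by simp
      finally show "(\<Sum>n<i. v' n ! k) = (\<Sum>n<j. v' n ! k)" by simp
    qed
    finally show "psum (pa_dim A) v i \<in> pa_constr A" using j by simp
  qed
  ultimately show "\<alpha> \<in> rpa_lang A" by (auto simp: rpa_lang_def)
qed

lemma part1: "RPA_recognizable L \<Longrightarrow> RPBA_recognizable L"
  unfolding RPA_recognizable_def RPBA_recognizable_def
  using bu_wf bu_sub1 bu_sub2 by blast


definition Binf :: "(nat, bool) parikh_aut" where
  "Binf = (| pa_states = {0,Suc 0}, pa_init = 0,
     pa_trans = (\<lambda>(q,a). (q,a,[],if a then Suc 0 else 0)) ` ({0,Suc 0} \<times> UNIV),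
     pa_final = {Suc 0}, pa_dim = 0, pa_constr = {[]} |)"

lemma Binf_wf: "pa_wf Binf"
proof -
  have "semilinear 0 {[]}" unfolding semilinear_def
    by (rule exI[of _ "{([],[])}"]) (auto simp: nvecs_def linear_set_def)
  moreover have "(\<lambda>(q,a). (q,a,[],if a then Suc 0 else 0::nat)) ` ({0,Suc 0} \<times> UNIV) \<subseteq> {0,Suc 0} \<times> UNIV \<times> nvecs 0 \<times> {0,1}"
    by (auto simp: nvecs_def split: if_split_asm)
  ultimately show ?thesis unfolding pa_wf_def Binf_def by simp
qed

lemma Binf_trans: "(q,a,w,y) \<in> pa_trans Binf \<longleftrightarrow> q \<in> {0,Suc 0} \<and> w = [] \<and> y = (if a then Suc 0 else 0)"
  unfolding Binf_def by (auto simp: image_iff)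

lemma Binf_lang: "rpba_lang Binf = {\<alpha>. infinite {n. \<alpha> n}}"
proof (intro set_eqI iffI)
  fix \<alpha> assume "\<alpha> \<in> rpba_lang Binf"
  then obtain p v where R: "pa_run Binf \<alpha> p v" and I: "infinite {j. p j \<in> pa_final Binf}"
    unfolding rpba_lang_def rpba_accepting_def by blast
  have ps: "p (Suc n) = (if \<alpha> n then Suc 0 else 0)" for n
  proof -
    have "(p n, \<alpha> n, v n, p (Suc n)) \<in> pa_trans Binf" using R by (simp add: pa_run_def)
    then show ?thesis by (auto simp: Binf_def)
  qed
  have "{j. p j \<in> pa_final Binf} \<subseteq> insert 0 (Suc ` {n. \<alpha> n})"
  proof
    fix j assume j: "j \<in> {j. p j \<in> pa_final Binf}"
    show "j \<in> insert 0 (Suc ` {n. \<alpha> n})"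
    proof (cases j)
      case (Suc m) then show ?thesis using j ps[of m] by (simp add: Binf_def split: if_splits)
    qed simp
  qed
  then have "infinite (Suc ` {n. \<alpha> n})" using I finite_subset by (metis finite_insert)
  then show "\<alpha> \<in> {\<alpha>. infinite {n. \<alpha> n}}" by auto
next
  fix \<alpha> :: "nat \<Rightarrow> bool" assume "\<alpha> \<in> {\<alpha>. infinite {n. \<alpha> n}}"
  then have inf: "infinite {n. \<alpha> n}" by simp
  define p where "p n = (case n of 0 \<Rightarrow> 0 | Suc m \<Rightarrow> if \<alpha> m then Suc 0 else (0::nat))" for n
  have R: "pa_run Binf \<alpha> p (\<lambda>_. [])"
    unfolding pa_run_def
  proof (intro conjI allI)
    show "p 0 = pa_init Binf" by (simp add: p_def Binf_def)
    fix n show "(p n, \<alpha> n, [], p (Suc n)) \<in> pa_trans Binf"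
      unfolding Binf_trans by (cases n) (auto simp: p_def)
  qed
  have S: "Suc ` {n. \<alpha> n} \<subseteq> {j. p j \<in> pa_final Binf}" by (auto simp: p_def Binf_def)
  have inf2: "infinite (Suc ` {n. \<alpha> n})" using inf finite_imageD inj_Suc by (metis inj_on_subset subset_UNIV)
  obtain n where "\<alpha> n" using inf by (metis Collect_empty_eq finite.emptyI)
  then have "\<exists>i\<ge>1. p i \<in> pa_final Binf \<and> psum (pa_dim Binf) (\<lambda>_. []) i \<in> pa_constr Binf"
    by (intro exI[of _ "Suc n"]) (simp add: p_def Binf_def psum_def)
  then show "\<alpha> \<in> rpba_lang Binf" unfolding rpba_lang_def rpba_accepting_def
    using R S inf2 finite_subset by blast
qed


lemma not_rpa:
  fixes A :: "(nat, bool) parikh_aut"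
  assumes wf: "pa_wf A"
  shows "rpa_lang A \<noteq> {\<alpha>. infinite {n. \<alpha> n}}"
proof
  assume E: "rpa_lang A = {\<alpha>. infinite {n. \<alpha> n}}"
  define N where "N = card (pa_states A)"
  define P where "P = Suc N"
  define \<alpha> where "\<alpha> n = (n mod P = N)" for n
  have NP: "N mod P = N" by (simp add: P_def)
  have "(N + x * P) mod P = N" for x using NP by (simp only: mod_mult_self1)
  then have "(\<lambda>n. N + n * P) ` UNIV \<subseteq> {n. \<alpha> n}" by (auto simp: \<alpha>_def)
  moreover have "inj (\<lambda>n. N + n * P)" by (rule injI) (metis P_def add_left_cancel mult_cancel2 nat.distinct(1))
  ultimately have "infinite {n. \<alpha> n}" by (meson finite_imageD finite_subset infinite_UNIV_nat)
  then have "\<alpha> \<in> rpa_lang A" using E by simp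
  then obtain p v i where R: "pa_run A \<alpha> p v" and i: "i \<ge> 1" "p i \<in> pa_final A"
    "psum (pa_dim A) v i \<in> pa_constr A"
    by (auto simp: rpa_lang_def rpa_accepting_def)
  have S: "p n \<in> pa_states A" for n using run_states[OF wf R] .
  have tr: "(p n, \<alpha> n, v n, p (Suc n)) \<in> pa_trans A" for n using R by (simp add: pa_run_def)
  define m where "m = (i div P + 1) * P"
  have im: "i < m"
  proof -
    have e: "i div P * P + i mod P = i" by (rule div_mult_mod_eq)
    have "i mod P < P" by (simp add: P_def)
    moreover have "m = i div P * P + P" by (simp add: m_def algebra_simps)
    ultimately show ?thesis using e by linarith
  qed
  have mP: "m mod P = 0" by (simp add: m_def)
  have af: "\<not> \<alpha> (m + r)" if "r < N" for r
  proof -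
    have "(r + (i div P + 1) * P) mod P = r mod P" by (rule mod_mult_self1)
    moreover have "r mod P = r" using that by (simp add: P_def)
    ultimately have "(m + r) mod P = r" by (simp add: m_def add.commute)
    then show ?thesis using that by (simp add: \<alpha>_def)
  qed
  have fin: "finite (pa_states A)" using wf by (simp add: pa_wf_def)
  have "\<not> inj_on p {m..m+N}"
  proof
    assume "inj_on p {m..m+N}"
    then have "card {m..m+N} \<le> card (pa_states A)" using card_inj_on_le[OF _ _ fin] S by blast
    then show False by (simp add: N_def)
  qed
  then obtain x y where xy: "x \<in> {m..m+N}" "y \<in> {m..m+N}" "x \<noteq> y" "p x = p y"
    unfolding inj_on_def by blast
  define j where "j = min x y"
  define k where "k = max x y"
  have jk: "m \<le> j" "j < k" "k \<le> m + N" "p j = p k" using xy by (auto simp: j_def k_def)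
  define L where "L = k - j"
  have L0: "L > 0" using jk by (simp add: L_def)
  define \<alpha>' where "\<alpha>' n = (if n < j then \<alpha> n else False)" for n
  define p' where "p' n = (if n < j then p n else p (j + (n - j) mod L))" for n
  define v' where "v' n = (if n < j then v n else v (j + (n - j) mod L))" for n
  have "pa_run A \<alpha>' p' v'" unfolding pa_run_def
  proof (intro conjI allI)
    show "p' 0 = pa_init A" using R jk im by (simp add: p'_def pa_run_def)
    fix n
    show "(p' n, \<alpha>' n, v' n, p' (Suc n)) \<in> pa_trans A"
    proof (cases "Suc n < j")
      case True then show ?thesis using tr[of n] by (simp add: p'_def v'_def \<alpha>'_def)
    next
      case F: False
      show ?thesis
      proof (cases "Suc n = j")
        case True then show ?thesis using tr[of n] by (simp add: p'_def v'_def \<alpha>'_def)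
      next
        case False
        then have nj: "j \<le> n" using F by simp
        define r where "r = (n - j) mod L"
        have rL: "r < L" using L0 by (simp add: r_def)
        have a: "\<not> \<alpha> (j + r)"
        proof -
          have "j + r = m + (j + r - m)" using jk by simp
          moreover have "j + r - m < N" using rL jk by (simp add: L_def)
          ultimately show ?thesis using af[of "j + r - m"] by simp
        qed
        have sn: "Suc n - j = Suc (n - j)" using nj by simp
        have nxt: "p' (Suc n) = p (Suc (j + r))"
        proof (cases "Suc r = L")
          case True
          then have "(Suc n - j) mod L = 0" using sn by (simp add: r_def mod_Suc)
          then have "p' (Suc n) = p j" using nj by (simp add: p'_def)
          also have "\<dots> = p (Suc (j + r))"
          proof -
            have "Suc (j + r) = k" using jk True by (simp add: L_def)
            then show ?thesis using jk by simp
          qed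
          finally show ?thesis .
        next
          case False
          then have "(Suc n - j) mod L = Suc r" using sn by (simp add: r_def mod_Suc)
          then show ?thesis using nj by (simp add: p'_def)
        qed
        show ?thesis using tr[of "j + r"] a nj nxt
          by (simp add: p'_def v'_def \<alpha>'_def r_def)
      qed
    qed
  qed
  moreover have "rpa_accepting A p' v'" unfolding rpa_accepting_def
  proof (intro exI[of _ i] conjI i(1))
    have ij: "i \<le> j" using im jk by simp
    show "p' i \<in> pa_final A" using i ij by (cases "i = j") (auto simp: p'_def)
    have "psum (pa_dim A) v' i = psum (pa_dim A) v i" by (rule psum_cong) (use ij in \<open>simp add: v'_def\<close>)
    then show "psum (pa_dim A) v' i \<in> pa_constr A" using i by simp
  qed
  ultimately have "\<alpha>' \<in> rpa_lang A" by (auto simp: rpa_lang_def)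
  moreover have "{n. \<alpha>' n} \<subseteq> {..<j}" by (auto simp: \<alpha>'_def split: if_splits)
  then have "finite {n. \<alpha>' n}" using finite_subset by blast
  ultimately show False using E by simp
qed

theorem lemma2:
  shows "(\<forall>L :: (nat \<Rightarrow> 'a::finite) set. RPA_recognizable L \<longrightarrow> RPBA_recognizable L)
         \<and> (\<exists>L :: (nat \<Rightarrow> bool) set. RPBA_recognizable L \<and> \<not> RPA_recognizable L)"
proof (intro conjI allI impI)
  fix L :: "(nat \<Rightarrow> 'a::finite) set" assume "RPA_recognizable L"
  then show "RPBA_recognizable L" by (rule part1)
next
  show "\<exists>L :: (nat \<Rightarrow> bool) set. RPBA_recognizable L \<and> \<not> RPA_recognizable L"
    apply (rule exI[of _ "{\<alpha>. infinite {n. \<alpha> n}}"])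
    using Binf_wf Binf_lang not_rpa
    unfolding RPBA_recognizable_def RPA_recognizable_def by metis
qed

end
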